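(* Let $H$ be a complex Hilbert space with $\dim H\geq 2$, $\mathcal{A}\subseteq\mathcal{B}(H)$ a standard operator algebra, $r,s$ nonnegative integers with $r+s\geq1$, and $A\in\mathcal{A}$ nonzero. The following are equivalent: (1) $A$ has rank one; (2) for every $B\in\mathcal{A}$, $\sigma_\pi(B^rA^*B^s)$ is a singleton; (3) for every $B\in\mathcal{A}$ with $\operatorname{rank}(B)\leq2$, $\sigma_\pi(B^rA^*B^s)$ is a singleton.
   Context: A standard operator algebra on a complex Hilbert space $H$ is a subalgebra of $\mathcal{B}(H)$ containing all finite rank operators; it need not be closed or unital. $A^*$ is the Hilbert-space adjoint. The peripheral spectrum of $T$ is $\sigma_\pi(T)=\{z\in\sigma(T):|z|=r(T)\}$, where $r(T)$ is the spectral radius. *)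

theory Defs
  imports "HOL-Analysis.Analysis"
begin

text \<open>A complex Hilbert space, encoded as a real Hilbert space together with a
  complex structure (multiplication by the imaginary unit) which is a real-linear
  isometry squaring to minus the identity.\<close>
class chilbert = real_inner + complete_space +
  fixes imult :: "'a \<Rightarrow> 'a"
  assumes imult_add: "imult (x + y) = imult x + imult y"
    and imult_scaleR: "imult (a *\<^sub>R x) = a *\<^sub>R imult x"
    and imult_imult: "imult (imult x) = - x"
    and imult_inner: "inner (imult x) (imult y) = inner x y"

definition cscale :: "complex \<Rightarrow> 'a::chilbert \<Rightarrow> 'a" where
  "cscale c x = Re c *\<^sub>R x + Im c *\<^sub>R imult x"

text \<open>Complex inner product (linear in the first argument).\<close>
definition cinner :: "'a::chilbert \<Rightarrow> 'a \<Rightarrow> complex" where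
  "cinner x y = Complex (inner x y) (inner x (imult y))"

text \<open>Bounded (complex-)linear operators, i.e. elements of B(H).\<close>
definition bop :: "('a::chilbert \<Rightarrow> 'a) \<Rightarrow> bool" where
  "bop T \<longleftrightarrow> bounded_linear T \<and> (\<forall>x. T (imult x) = imult (T x))"

definition cadj :: "('a::chilbert \<Rightarrow> 'a) \<Rightarrow> ('a \<Rightarrow> 'a)" where
  "cadj T = (THE S. bop S \<and> (\<forall>x y. cinner (T x) y = cinner x (S y)))"

definition cspan :: "'a::chilbert set \<Rightarrow> 'a set" where
  "cspan S = {x. \<exists>F c. finite F \<and> F \<subseteq> S \<and> x = (\<Sum>v\<in>F. cscale (c v) v)}"

text \<open>Rank (complex dimension of the range), infinite if not finite.\<close>
definition crank :: "('a::chilbert \<Rightarrow> 'a) \<Rightarrow> enat" where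
  "crank T = Inf {enat (card F) | F. finite F \<and> range T \<subseteq> cspan F}"

definition cspectrum :: "('a::chilbert \<Rightarrow> 'a) \<Rightarrow> complex set" where
  "cspectrum T = {w. \<not> (\<exists>S. bop S \<and> (\<forall>x. S (T x - cscale w x) = x)
                                   \<and> (\<forall>x. T (S x) - cscale w (S x) = x))}"

definition spec_radius :: "('a::chilbert \<Rightarrow> 'a) \<Rightarrow> real" where
  "spec_radius T = Sup (cmod ` cspectrum T)"

definition periph_spectrum :: "('a::chilbert \<Rightarrow> 'a) \<Rightarrow> complex set" where
  "periph_spectrum T = {z \<in> cspectrum T. cmod z = spec_radius T}"

text \<open>Standard operator algebra: a subalgebra of B(H) (not necessarily closed
  or unital) containing all finite rank operators.\<close>
definition standard_op_alg :: "('a::chilbert \<Rightarrow> 'a) set \<Rightarrow> bool" where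
  "standard_op_alg \<A> \<longleftrightarrow>
     (\<forall>T\<in>\<A>. bop T) \<and>
     (\<forall>S\<in>\<A>. \<forall>T\<in>\<A>. (\<lambda>x. S x + T x) \<in> \<A>) \<and>
     (\<forall>c. \<forall>T\<in>\<A>. (\<lambda>x. cscale c (T x)) \<in> \<A>) \<and>
     (\<forall>S\<in>\<A>. \<forall>T\<in>\<A>. S \<circ> T \<in> \<A>) \<and>
     (\<forall>T. bop T \<and> crank T < \<infinity> \<longrightarrow> T \<in> \<A>)"

end

theory Submission
  imports Defs "HOL-Computational_Algebra.Polynomial"
begin

lemma imult_zero[simp]: "imult 0 = 0"
  using imult_scaleR[of 0 0] by simp

lemma imult_minus[simp]: "imult (- x) = - imult x"
  using imult_scaleR[of "-1" x] by simp

lemma imult_diff: "imult (x - y) = imult x - imult y"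
  using imult_add[of x "- y"] by simp

lemma imult_sum: "imult (sum f F) = (\<Sum>i\<in>F. imult (f i))"
  by (induction F rule: infinite_finite_induct) (auto simp: imult_add)

lemma inner_imult_left: "inner (imult x) y = - inner x (imult y)"
proof -
  have "inner (imult x) y = inner (imult (imult x)) (imult y)" by (rule imult_inner[symmetric])
  also have "\<dots> = - inner x (imult y)" by (simp add: imult_imult)
  finally show ?thesis .
qed

lemma inner_imult_self[simp]: "inner x (imult x) = 0"
  using inner_imult_left[of x x] by (simp add: inner_commute)

lemma inner_imult_self'[simp]: "inner (imult x) x = 0"
  using inner_imult_self[of x] by (simp add: inner_commute)

lemma norm_imult[simp]: "norm (imult x) = norm x"
  by (simp add: norm_eq_sqrt_inner imult_inner)

lemma bounded_linear_imult: "bounded_linear imult"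
  by (rule bounded_linear_intro[of _ 1]) (auto simp: imult_add imult_scaleR)

lemma cscale_add_right: "cscale c (x + y) = cscale c x + cscale c y"
  by (simp add: cscale_def imult_add algebra_simps)

lemma cscale_add_left: "cscale (a + b) x = cscale a x + cscale b x"
  by (simp add: cscale_def algebra_simps)

lemma cscale_mult: "cscale a (cscale b x) = cscale (a * b) x"
  by (simp add: cscale_def imult_add imult_scaleR imult_imult algebra_simps)

lemma cscale_one[simp]: "cscale 1 x = x"
  by (simp add: cscale_def)

lemma cscale_zero_left[simp]: "cscale 0 x = 0"
  by (simp add: cscale_def)

lemma cscale_zero_right[simp]: "cscale c 0 = 0"
  by (simp add: cscale_def)

lemma cscale_of_real[simp]: "cscale (of_real r) x = r *\<^sub>R x"
  by (simp add: cscale_def)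

lemma cscale_ii: "cscale \<i> x = imult x"
  by (simp add: cscale_def)

lemma imult_cscale: "imult (cscale c x) = cscale c (imult x)"
  by (simp add: cscale_def imult_add imult_scaleR)

lemma cscale_minus_right: "cscale c (- x) = - cscale c x"
  by (simp add: cscale_def)

lemma cscale_minus_left: "cscale (- c) x = - cscale c x"
  by (simp add: cscale_def)

lemma cscale_diff_right: "cscale c (x - y) = cscale c x - cscale c y"
  by (simp add: cscale_def imult_diff algebra_simps)

lemma cscale_diff_left: "cscale (a - b) x = cscale a x - cscale b x"
  by (simp add: cscale_def algebra_simps)

lemma cscale_sum_right: "cscale c (sum f F) = (\<Sum>i\<in>F. cscale c (f i))"
  by (induction F rule: infinite_finite_induct) (auto simp: cscale_add_right)

lemma cscale_sum_left: "cscale (sum f F) x = (\<Sum>i\<in>F. cscale (f i) x)"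
  by (induction F rule: infinite_finite_induct) (auto simp: cscale_add_left)

lemma cscale_eq_0_iff[simp]: "cscale c x = 0 \<longleftrightarrow> c = 0 \<or> x = 0"
proof
  assume h: "cscale c x = 0"
  show "c = 0 \<or> x = 0"
  proof (rule ccontr)
    assume "\<not> (c = 0 \<or> x = 0)"
    then have "c \<noteq> 0" "x \<noteq> 0" by auto
    have "cscale (inverse c) (cscale c x) = x" using \<open>c \<noteq> 0\<close> by (simp add: cscale_mult)
    with h \<open>x \<noteq> 0\<close> show False by simp
  qed
qed auto

lemma bounded_linear_cscale: "bounded_linear (cscale c)"
proof -
  have "bounded_linear (\<lambda>x. Re c *\<^sub>R x + Im c *\<^sub>R imult x)"
    by (intro bounded_linear_add bounded_linear_scaleR_right bounded_linear_ident
        bounded_linear_compose[OF bounded_linear_scaleR_right bounded_linear_imult])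
  then show ?thesis unfolding cscale_def[abs_def] .
qed

lemma norm_cscale: "norm (cscale c x) = cmod c * norm x"
proof -
  have "(norm (cscale c x))^2 = inner (cscale c x) (cscale c x)" by (simp add: power2_norm_eq_inner)
  also have "\<dots> = (Re c ^2 + Im c ^2) * (norm x)^2"
    by (simp add: cscale_def inner_add_left inner_add_right imult_inner power2_norm_eq_inner
        algebra_simps power2_eq_square inner_commute[of "imult x" x])
       (simp add: dot_square_norm power2_eq_square)
  also have "\<dots> = (cmod c * norm x)^2" by (simp add: cmod_def power_mult_distrib)
  finally show ?thesis by (simp add: power2_eq_iff_nonneg)
qed

lemma cinner_add_left: "cinner (x + y) z = cinner x z + cinner y z"
  by (simp add: cinner_def inner_add_left complex_eq_iff)

lemma cinner_add_right: "cinner z (x + y) = cinner z x + cinner z y"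
  by (simp add: cinner_def inner_add_right imult_add complex_eq_iff)

lemma cinner_diff_left: "cinner (x - y) z = cinner x z - cinner y z"
  by (simp add: cinner_def inner_diff_left complex_eq_iff)

lemma cinner_diff_right: "cinner z (x - y) = cinner z x - cinner z y"
  by (simp add: cinner_def inner_diff_right imult_diff complex_eq_iff)

lemma cinner_minus_left[simp]: "cinner (- x) z = - cinner x z"
  by (simp add: cinner_def complex_eq_iff)

lemma cinner_minus_right[simp]: "cinner z (- x) = - cinner z x"
  by (simp add: cinner_def complex_eq_iff)

lemma cinner_zero_left[simp]: "cinner 0 z = 0"
  by (simp add: cinner_def complex_eq_iff)

lemma cinner_zero_right[simp]: "cinner z 0 = 0"
  by (simp add: cinner_def complex_eq_iff)

lemma cinner_scale_left: "cinner (cscale c x) y = c * cinner x y"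
  by (simp add: cinner_def cscale_def inner_add_left inner_imult_left complex_eq_iff algebra_simps
      imult_inner imult_imult)

lemma cinner_scale_right: "cinner x (cscale c y) = cnj c * cinner x y"
  by (simp add: cinner_def cscale_def inner_add_right imult_add imult_scaleR imult_imult
      complex_eq_iff algebra_simps)

lemma cinner_commute: "cinner y x = cnj (cinner x y)"
  using inner_imult_left[of x y] by (simp add: cinner_def complex_eq_iff inner_commute)

lemma cinner_self: "cinner x x = of_real ((norm x)^2)"
  by (simp add: cinner_def complex_eq_iff power2_norm_eq_inner)

lemma cinner_self_eq_0[simp]: "cinner x x = 0 \<longleftrightarrow> x = 0"
  by (simp add: cinner_self)

lemma cinner_sum_left: "cinner (sum f F) z = (\<Sum>i\<in>F. cinner (f i) z)"
  by (induction F rule: infinite_finite_induct) (auto simp: cinner_add_left)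

lemma cinner_sum_right: "cinner z (sum f F) = (\<Sum>i\<in>F. cinner z (f i))"
  by (induction F rule: infinite_finite_induct) (auto simp: cinner_add_right)

lemma Re_cinner: "Re (cinner x y) = inner x y"
  by (simp add: cinner_def)

lemma cinner_ext: assumes "\<And>z. cinner x z = cinner y z" shows "x = y"
proof -
  have "cinner (x - y) (x - y) = 0"
    using assms[of "x - y"] by (simp add: cinner_diff_left)
  then show ?thesis by simp
qed

lemma cinner_ext': assumes "\<And>z. cinner z x = cinner z y" shows "x = y"
  using assms by (intro cinner_ext) (metis cinner_commute)

lemma cmod_cinner_le: "cmod (cinner x y) \<le> norm x * norm y"
proof (cases "cinner x y = 0")
  case True then show ?thesis by simp
next
  case False
  define z where "z = cinner x y"
  define w where "w = cnj z / of_real (cmod z)"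
  have cw: "cmod w = 1" using False by (simp add: w_def z_def norm_divide)
  have "cinner (cscale w x) y = w * z" by (simp add: cinner_scale_left z_def)
  also have "\<dots> = of_real (cmod z)" using False
    by (simp add: w_def z_def field_simps)
       (metis complex_norm_square of_real_mult power2_eq_square)
  finally have "cmod z = Re (cinner (cscale w x) y)" by simp
  also have "\<dots> = inner (cscale w x) y" by (simp add: Re_cinner)
  also have "\<dots> \<le> norm (cscale w x) * norm y" by (rule norm_cauchy_schwarz)
  also have "\<dots> = norm x * norm y" by (simp add: norm_cscale cw)
  finally show ?thesis by (simp add: z_def)
qed

lemma bopD: assumes "bop T"
  shows bop_add: "T (x + y) = T x + T y"
    and bop_cscale: "T (cscale c x) = cscale c (T x)"
    and bop_zero: "T 0 = 0"
    and bop_minus: "T (- x) = - T x"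
    and bop_diff: "T (x - y) = T x - T y"
    and bop_imult: "T (imult x) = imult (T x)"
    and bop_bl: "bounded_linear T"
proof -
  interpret bounded_linear T using assms by (simp add: bop_def)
  show "T (x + y) = T x + T y" by (rule add)
  show "T 0 = 0" by (rule zero)
  show "T (- x) = - T x" using diff[of 0 x] zero by simp
  show "T (x - y) = T x - T y" by (rule diff)
  show "T (imult x) = imult (T x)" using assms by (simp add: bop_def)
  show "T (cscale c x) = cscale c (T x)"
    using assms by (simp add: cscale_def add scale bop_def)
  show "bounded_linear T" using assms by (simp add: bop_def)
qed

lemma bop_sum: "bop T \<Longrightarrow> T (sum f F) = (\<Sum>i\<in>F. T (f i))"
  by (induction F rule: infinite_finite_induct) (auto simp: bop_add bop_zero)

lemma bop_id[simp]: "bop id" "bop (\<lambda>x. x)"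
  by (auto simp: bop_def bounded_linear_ident id_def)

lemma bop_zero_op[simp]: "bop (\<lambda>x. 0)"
  by (auto simp: bop_def)

lemma bop_comp: "bop S \<Longrightarrow> bop T \<Longrightarrow> bop (S \<circ> T)"
  by (auto simp: bop_def o_def intro: bounded_linear_compose)

lemma bop_comp': "bop S \<Longrightarrow> bop T \<Longrightarrow> bop (\<lambda>x. S (T x))"
  using bop_comp[of S T] by (simp add: o_def)

lemma bop_plus: "bop S \<Longrightarrow> bop T \<Longrightarrow> bop (\<lambda>x. S x + T x)"
  by (auto simp: bop_def bounded_linear_add imult_add)

lemma bop_minus_op: "bop S \<Longrightarrow> bop T \<Longrightarrow> bop (\<lambda>x. S x - T x)"
  by (auto simp: bop_def bounded_linear_sub imult_diff)

lemma bop_scale: "bop T \<Longrightarrow> bop (\<lambda>x. cscale c (T x))"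
  by (auto simp: bop_def imult_cscale intro: bounded_linear_compose[OF bounded_linear_cscale])

lemma bop_cscale_op: "bop (cscale c)"
  using bop_scale[of "\<lambda>x. x" c] by simp

lemma bop_funpow: "bop T \<Longrightarrow> bop (T ^^ n)"
  by (induction n) (auto simp: bop_comp)

lemma bounded_linear_cinner_left: "bounded_linear (\<lambda>x. cinner x g)"
proof (rule bounded_linear_intro[of _ "norm g"])
  show "cinner (x + y) g = cinner x g + cinner y g" for x y by (rule cinner_add_left)
  show "cinner (r *\<^sub>R x) g = r *\<^sub>R cinner x g" for r x
    using cinner_scale_left[of "of_real r" x g] by (simp add: scaleR_conv_of_real)
  show "norm (cinner x g) \<le> norm x * norm g" for x by (rule cmod_cinner_le)
qed

lemma bop_rank1: "bop (\<lambda>x. cscale (cinner x g) u)"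
proof -
  have "bounded_linear (\<lambda>x. cscale (cinner x g) u)"
  proof -
    have "bounded_linear (\<lambda>x. Re (cinner x g) *\<^sub>R u + Im (cinner x g) *\<^sub>R imult u)"
      by (intro bounded_linear_add
          bounded_linear_compose[OF bounded_linear_scaleR_left
            bounded_linear_compose[OF bounded_linear_Re bounded_linear_cinner_left]]
          bounded_linear_compose[OF bounded_linear_scaleR_left
            bounded_linear_compose[OF bounded_linear_Im bounded_linear_cinner_left]])
    then show ?thesis by (simp add: cscale_def)
  qed
  moreover have "cscale (cinner (imult x) g) u = imult (cscale (cinner x g) u)" for x
    by (simp add: cscale_ii[symmetric] cinner_scale_left cscale_mult imult_cscale[symmetric] mult.commute)
  ultimately show ?thesis by (simp add: bop_def)
qed

lemma parallelogram:
  fixes a b :: "'a::real_inner"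
  shows "(norm (a - b))^2 + (norm (a + b))^2 = 2 * (norm a)^2 + 2 * (norm b)^2"
  by (simp add: power2_norm_eq_inner inner_add_left inner_add_right inner_diff_left
      inner_diff_right inner_commute[of b a])

lemma riesz_real:
  fixes f :: "'a::{real_inner,complete_space} \<Rightarrow> real"
  assumes bl: "bounded_linear f"
  shows "\<exists>w. \<forall>x. f x = inner x w"
proof (cases "\<forall>x. f x = 0")
  case True then show ?thesis by (intro exI[of _ 0]) simp
next
  case False
  interpret f: bounded_linear f by (rule bl)
  from False obtain x1 where x1: "f x1 \<noteq> 0" by auto
  define S where "S = {x. f x = 1}"
  have s1: "(1 / f x1) *\<^sub>R x1 \<in> S" using x1 by (simp add: S_def f.scale)
  define d where "d = Inf (norm ` S)"
  have bdd: "bdd_below (norm ` S)" by (rule bdd_belowI[of _ 0]) auto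
  have lower: "d \<le> norm y" if "f y = 1" for y
    unfolding d_def using that bdd by (intro cInf_lower) (auto simp: S_def)
  have d0: "0 \<le> d" unfolding d_def using s1 by (intro cInf_greatest) auto
  have "\<exists>x. f x = 1 \<and> norm x < d + 1 / real (Suc n)" for n
  proof -
    have "Inf (norm ` S) < d + 1 / real (Suc n)" by (simp add: d_def)
    then obtain v where "v \<in> norm ` S" "v < d + 1 / real (Suc n)"
      using cInf_lessD[of "norm ` S"] s1 by blast
    then show ?thesis by (auto simp: S_def)
  qed
  then obtain X where X: "\<And>n. f (X n) = 1" "\<And>n. norm (X n) < d + 1 / real (Suc n)"
    by metis
  define K where "K = 2 * d + 1"
  have K0: "K > 0" using d0 by (simp add: K_def)
  have sq: "(norm (X n))^2 \<le> d^2 + K / real (Suc n)" for n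
  proof -
    define e where "e = 1 / real (Suc n)"
    have e0: "0 < e" "e \<le> 1" by (auto simp: e_def field_simps)
    have "norm (X n) < d + e" using X(2) by (simp add: e_def)
    then have "(norm (X n))^2 \<le> (d + e)^2"
      by (intro power_mono) auto
    also have "\<dots> = d^2 + e * (2 * d + e)" by (simp add: power2_eq_square algebra_simps)
    also have "\<dots> \<le> d^2 + e * K" using e0 by (simp add: K_def)
    finally show ?thesis by (simp add: e_def)
  qed
  have dist_bound: "(norm (X m - X n))^2 \<le> 2 * K * (1 / real (Suc m) + 1 / real (Suc n))" for m n
  proof -
    have "f ((1/2) *\<^sub>R (X m + X n)) = 1" using X(1) by (simp add: f.scale f.add)
    then have "d \<le> norm ((1/2) *\<^sub>R (X m + X n))" by (rule lower)
    then have "d \<le> norm (X m + X n) / 2" by simp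
    then have "(2 * d)^2 \<le> (norm (X m + X n))^2"
      using d0 by (intro power_mono) auto
    moreover have "(norm (X m - X n))^2 = 2 * (norm (X m))^2 + 2 * (norm (X n))^2 - (norm (X m + X n))^2"
      using parallelogram[of "X m" "X n"] by simp
    ultimately have "(norm (X m - X n))^2 \<le> 2 * (K / real (Suc m)) + 2 * (K / real (Suc n))"
      using sq[of m] sq[of n] by (simp add: power_mult_distrib)
    then show ?thesis by (simp add: algebra_simps)
  qed
  have "Cauchy X"
  proof (rule metric_CauchyI)
    fix e :: real assume e: "0 < e"
    have "0 < e^2 / (4 * K)" using e K0 by simp
    then obtain M where M: "inverse (real (Suc M)) < e^2 / (4 * K)"
      using reals_Archimedean by blast
    show "\<exists>M. \<forall>m\<ge>M. \<forall>n\<ge>M. dist (X m) (X n) < e"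
    proof (intro exI allI impI)
      fix m n assume mn: "M \<le> m" "M \<le> n"
      have "1 / real (Suc m) \<le> 1 / real (Suc M)" "1 / real (Suc n) \<le> 1 / real (Suc M)"
        using mn by (auto simp: field_simps)
      then have "(norm (X m - X n))^2 \<le> 2 * K * (2 / real (Suc M))"
      proof -
        have "1 / real (Suc m) + 1 / real (Suc n) \<le> 2 / real (Suc M)"
          using \<open>1 / real (Suc m) \<le> 1 / real (Suc M)\<close> \<open>1 / real (Suc n) \<le> 1 / real (Suc M)\<close>
          by simp
        then have "2 * K * (1 / real (Suc m) + 1 / real (Suc n)) \<le> 2 * K * (2 / real (Suc M))"
          using K0 by (intro mult_left_mono) auto
        then show ?thesis using dist_bound[of m n] by linarith
      qed
      also have "\<dots> < 2 * K * (2 * (e^2 / (4 * K)))"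
        using M K0 by (simp add: field_simps)
      also have "\<dots> = e^2" using K0 by simp
      finally have "(norm (X m - X n))^2 < e^2" .
      then have "norm (X m - X n) < e" using e by (simp add: power_less_imp_less_base)
      then show "dist (X m) (X n) < e" by (simp add: dist_norm)
    qed
  qed
  then obtain x0 where lim: "X \<longlonglongrightarrow> x0"
    using Cauchy_convergent convergent_def by blast
  have fx0: "f x0 = 1"
  proof -
    have "(\<lambda>n. f (X n)) \<longlonglongrightarrow> f x0" by (rule f.tendsto[OF lim])
    moreover have "(\<lambda>n. f (X n)) \<longlonglongrightarrow> 1" using X(1) by simp
    ultimately show ?thesis using LIMSEQ_unique by blast
  qed
  have nx0: "norm x0 \<le> d"
  proof -
    have "(\<lambda>n. norm (X n)) \<longlonglongrightarrow> norm x0" by (rule tendsto_norm[OF lim])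
    moreover have "(\<lambda>n. d + 1 / real (Suc n)) \<longlonglongrightarrow> d + 0"
      by (intro tendsto_add tendsto_const LIMSEQ_Suc[OF lim_inverse_n'])
    ultimately show ?thesis
      using X(2) by (intro LIMSEQ_le[of "\<lambda>n. norm (X n)" _ "\<lambda>n. d + 1 / real (Suc n)"])
        (auto intro: less_imp_le)
  qed
  have orth: "inner x0 k = 0" if "f k = 0" for k
  proof (cases "k = 0")
    case True then show ?thesis by simp
  next
    case False
    define t where "t = - inner x0 k / inner k k"
    have kk: "inner k k > 0" using False by simp
    have "f (x0 + t *\<^sub>R k) = 1" using fx0 that by (simp add: f.add f.scale)
    then have "norm x0 \<le> norm (x0 + t *\<^sub>R k)" using lower nx0 by force
    then have "(norm x0)^2 \<le> (norm (x0 + t *\<^sub>R k))^2" by (intro power_mono) auto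
    also have "\<dots> = inner x0 x0 + 2 * t * inner x0 k + t * t * inner k k"
      by (simp add: power2_norm_eq_inner inner_add_left inner_add_right inner_commute[of k x0]
          algebra_simps)
    also have "\<dots> = inner x0 x0 - (inner x0 k)^2 / inner k k"
      using kk by (simp add: t_def field_simps power2_eq_square)
    finally have "(inner x0 k)^2 / inner k k \<le> 0" by (simp add: power2_norm_eq_inner)
    then have "(inner x0 k)^2 \<le> 0" using kk by (simp add: divide_le_0_iff)
    then show ?thesis by simp
  qed
  have x00: "x0 \<noteq> 0" using fx0 by auto
  define w where "w = (1 / inner x0 x0) *\<^sub>R x0"
  show ?thesis
  proof (intro exI allI)
    fix x
    have "f (x - f x *\<^sub>R x0) = 0" using fx0 by (simp add: f.diff f.scale)
    then have "inner x0 (x - f x *\<^sub>R x0) = 0" by (rule orth)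
    then have "inner x0 x = f x * inner x0 x0" by (simp add: inner_diff_right)
    then show "f x = inner x w" using x00 by (simp add: w_def inner_commute[of x x0])
  qed
qed

lemma real_adjoint_exists:
  fixes T :: "'a::chilbert \<Rightarrow> 'a"
  assumes "bounded_linear T"
  shows "\<exists>S. \<forall>x y. inner (T x) y = inner x (S y)"
proof -
  have "\<forall>y. \<exists>w. \<forall>x. inner (T x) y = inner x w"
  proof
    fix y
    have "bounded_linear (\<lambda>x. inner (T x) y)"
      by (rule bounded_linear_compose[OF bounded_linear_inner_left assms])
    then show "\<exists>w. \<forall>x. inner (T x) y = inner x w" by (rule riesz_real)
  qed
  then show ?thesis by metis
qed

lemma inner_ext: fixes a b :: "'a::real_inner"
  assumes "\<And>x. inner x a = inner x b" shows "a = b"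
proof -
  have "inner (a - b) (a - b) = 0" using assms[of "a - b"]
    by (simp add: inner_diff_right)
  then show ?thesis by simp
qed

lemma adjoint_exists:
  fixes T :: "'a::chilbert \<Rightarrow> 'a"
  assumes T: "bop T"
  shows "\<exists>S. bop S \<and> (\<forall>x y. cinner (T x) y = cinner x (S y))"
proof -
  have blT: "bounded_linear T" using T by (simp add: bop_def)
  interpret T: bounded_linear T by (rule blT)
  obtain S where S: "\<And>x y. inner (T x) y = inner x (S y)"
    using real_adjoint_exists[OF blT] by blast
  have Sadd: "S (y + z) = S y + S z" for y z
    by (rule inner_ext) (simp add: S[symmetric] inner_add_right)
  have Sscale: "S (r *\<^sub>R y) = r *\<^sub>R S y" for r y
    by (rule inner_ext) (simp add: S[symmetric])
  have Simult: "S (imult y) = imult (S y)" for y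
  proof (rule inner_ext)
    fix x
    have "inner x (S (imult y)) = inner (T x) (imult y)" by (simp add: S)
    also have "\<dots> = - inner (imult (T x)) y" by (simp add: inner_imult_left)
    also have "\<dots> = - inner (T (imult x)) y" using T by (simp add: bop_imult)
    also have "\<dots> = - inner (imult x) (S y)" by (simp add: S)
    also have "\<dots> = inner x (imult (S y))" by (simp add: inner_imult_left)
    finally show "inner x (S (imult y)) = inner x (imult (S y))" .
  qed
  obtain K where K: "\<And>x. norm (T x) \<le> norm x * K" "K > 0" using T.pos_bounded by blast
  have Sbound: "norm (S y) \<le> norm y * K" for y
  proof (cases "S y = 0")
    case True then show ?thesis using K by simp
  next
    case False
    have "(norm (S y))^2 = inner (T (S y)) y" by (simp add: S power2_norm_eq_inner)
    also have "\<dots> \<le> norm (T (S y)) * norm y" by (rule norm_cauchy_schwarz)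
    also have "\<dots> \<le> norm (S y) * K * norm y" using K by (simp add: mult_right_mono)
    finally have "norm (S y) * norm (S y) \<le> norm (S y) * (norm y * K)"
      by (simp add: power2_eq_square mult_ac)
    then show ?thesis using False by simp
  qed
  have "bop S" unfolding bop_def
    by (intro conjI allI bounded_linear_intro[of S K] Sadd Sscale Sbound Simult)
  moreover have "cinner (T x) y = cinner x (S y)" for x y
  proof -
    have "inner (T x) (imult y) = inner x (imult (S y))"
      by (simp add: Simult[symmetric] S)
    then show ?thesis by (simp add: cinner_def S)
  qed
  ultimately show ?thesis by blast
qed

lemma cadj:
  fixes T :: "'a::chilbert \<Rightarrow> 'a"
  assumes T: "bop T"
  shows "bop (cadj T)" "\<And>x y. cinner (T x) y = cinner x (cadj T y)"
proof -
  have ex1: "\<exists>!S. bop S \<and> (\<forall>x y. cinner (T x) y = cinner x (S y))"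
  proof (rule ex_ex1I)
    show "\<exists>S. bop S \<and> (\<forall>x y. cinner (T x) y = cinner x (S y))" by (rule adjoint_exists[OF T])
  next
    fix S1 S2 assume "bop S1 \<and> (\<forall>x y. cinner (T x) y = cinner x (S1 y))"
      "bop S2 \<and> (\<forall>x y. cinner (T x) y = cinner x (S2 y))"
    then have "S1 y = S2 y" for y by (intro cinner_ext') auto
    then show "S1 = S2" by auto
  qed
  have "bop (cadj T) \<and> (\<forall>x y. cinner (T x) y = cinner x (cadj T y))"
    unfolding cadj_def by (rule theI'[OF ex1])
  then show "bop (cadj T)" "\<And>x y. cinner (T x) y = cinner x (cadj T y)" by auto
qed

section \<open>Spans and rank\<close>

lemma cspan_empty[simp]: "cspan {} = {0}"
  by (auto simp: cspan_def intro: exI[of _ "{}"])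

lemma cspan_single: "x \<in> cspan {b} \<longleftrightarrow> (\<exists>c. x = cscale c b)"
proof
  assume "x \<in> cspan {b}"
  then obtain F c where "finite F" "F \<subseteq> {b}" "x = (\<Sum>v\<in>F. cscale (c v) v)"
    by (auto simp: cspan_def)
  moreover have "F = {} \<or> F = {b}" using \<open>F \<subseteq> {b}\<close> by blast
  ultimately show "\<exists>c. x = cscale c b"
    by (metis cscale_zero_left empty_iff sum.empty sum.insert finite.emptyI add_0_right)
next
  assume "\<exists>c. x = cscale c b"
  then obtain c where "x = cscale c b" by auto
  then show "x \<in> cspan {b}" unfolding cspan_def
    by (intro CollectI exI[of _ "{b}"] exI[of _ "\<lambda>_. c"]) auto
qed

lemma cspan_pair: "cscale a u + cscale b v \<in> cspan {u, v}"
proof (cases "u = v")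
  case True
  show ?thesis unfolding cspan_def
    apply (rule CollectI)
    apply (rule exI[of _ "{u}"])
    apply (rule exI[of _ "\<lambda>_. a + b"])
    using True by (simp add: cscale_add_left)
next
  case False
  show ?thesis unfolding cspan_def
    apply (rule CollectI)
    apply (rule exI[of _ "{u, v}"])
    apply (rule exI[of _ "\<lambda>w. if w = u then a else b"])
    using False by simp
qed

lemma crank_le: assumes "finite F" "range T \<subseteq> cspan F" shows "crank T \<le> enat (card F)"
  unfolding crank_def
  apply (rule Inf_lower)
  apply (rule CollectI)
  apply (rule exI[of _ F])
  using assms by simp

lemma crank_le2: assumes "\<And>x. \<exists>a b. T x = cscale a u + cscale b v"
  shows "crank T \<le> 2"
proof -
  have tx: "T x \<in> cspan {u, v}" for x
  proof -
    obtain a b where "T x = cscale a u + cscale b v" using assms by blast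
    then show ?thesis using cspan_pair[of a u b v] by (simp only:)
  qed
  have "range T \<subseteq> cspan {u, v}" by (rule image_subsetI) (rule tx)
  then have c1: "crank T \<le> enat (card {u, v})" by (rule crank_le[rotated]) simp
  have "card {u, v} \<le> 2" by (simp add: card_insert_le_m1)
  then have "enat (card {u, v}) \<le> 2" by (simp add: numeral_eq_enat)
  with c1 show ?thesis by (rule order_trans)
qed

lemma crank_le2_fin: assumes "\<And>x. \<exists>a b. T x = cscale a u + cscale b v"
  shows "crank T < \<infinity>"
  by (rule le_less_trans[OF crank_le2[OF assms]]) (simp add: numeral_eq_enat)

definition rk1 :: "('a::chilbert \<Rightarrow> 'a) \<Rightarrow> bool" where
  "rk1 T \<longleftrightarrow> (\<exists>b. \<forall>x. \<exists>c. T x = cscale c b)"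

lemma crank_in: assumes "crank T \<noteq> \<infinity>"
  shows "\<exists>F. finite F \<and> range T \<subseteq> cspan F \<and> crank T = enat (card F)"
proof -
  define M where "M = {enat (card F) | F. finite F \<and> range T \<subseteq> cspan F}"
  have cr: "crank T = Inf M" by (simp add: crank_def M_def)
  have ne: "M \<noteq> {}"
  proof
    assume "M = {}"
    then have "crank T = \<infinity>" by (simp add: cr top_enat_def)
    with assms show False by simp
  qed
  then obtain m where m: "m \<in> M" by blast
  have "crank T = (LEAST x. x \<in> M)" using ne by (simp add: cr Inf_enat_def)
  moreover have "(LEAST x. x \<in> M) \<in> M" by (rule LeastI[of "\<lambda>x. x \<in> M", OF m])
  ultimately have "crank T \<in> M" by simp
  then show ?thesis unfolding M_def by blast
qed

lemma crank_one_iff: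
  assumes "T \<noteq> (\<lambda>_. 0)"
  shows "crank T = 1 \<longleftrightarrow> rk1 T"
proof
  assume h: "crank T = 1"
  then obtain F where F: "finite F" "range T \<subseteq> cspan F" "enat (card F) = 1"
    using crank_in[of T] h by (metis one_enat_def enat.distinct(1))
  then have "card F = 1" by (simp add: one_enat_def)
  then obtain b where "F = {b}" by (auto simp: card_Suc_eq)
  with F have "\<forall>x. T x \<in> cspan {b}" by auto
  then show "rk1 T" unfolding rk1_def cspan_single by blast
next
  assume "rk1 T"
  then obtain b where b: "\<And>x. \<exists>c. T x = cscale c b" by (auto simp: rk1_def)
  have "range T \<subseteq> cspan {b}" using b by (auto simp: cspan_single)
  then have le: "crank T \<le> 1" using crank_le[of "{b}" T] by (simp add: one_enat_def)
  have "crank T \<noteq> 0"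
  proof
    assume "crank T = 0"
    then obtain F where F: "finite F" "range T \<subseteq> cspan F" "enat (card F) = 0"
    proof -
      have "crank T \<noteq> \<infinity>" using \<open>crank T = 0\<close> by simp
      then show ?thesis using crank_in[of T] \<open>crank T = 0\<close> that by metis
    qed
    then have "F = {}" by (simp add: zero_enat_def)
    with F have "\<forall>x. T x = 0" by auto
    with assms show False by auto
  qed
  with le show "crank T = 1"
    by (cases "crank T") (auto simp: one_enat_def zero_enat_def)
qed

section \<open>Spectrum\<close>

lemma spec_eig:
  assumes T: "bop T" and z: "z \<noteq> 0" "T z = cscale w z"
  shows "w \<in> cspectrum T"
proof -
  have "\<not> (\<exists>S. bop S \<and> (\<forall>x. S (T x - cscale w x) = x) \<and> (\<forall>x. T (S x) - cscale w (S x) = x))"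
  proof
    assume "\<exists>S. bop S \<and> (\<forall>x. S (T x - cscale w x) = x) \<and> (\<forall>x. T (S x) - cscale w (S x) = x)"
    then obtain S where "bop S" "\<And>x. S (T x - cscale w x) = x" by auto
    then have "S 0 = z" using z(2)[symmetric] by (metis diff_self)
    with \<open>bop S\<close> z(1) show False by (simp add: bop_zero)
  qed
  then show ?thesis by (simp add: cspectrum_def)
qed

lemma spec_nonsurj:
  assumes "y \<notin> range T"
  shows "0 \<in> cspectrum T"
proof -
  have "\<not> (\<exists>S. bop S \<and> (\<forall>x. S (T x - cscale 0 x) = x) \<and> (\<forall>x. T (S x) - cscale 0 (S x) = x))"
  proof
    assume "\<exists>S. bop S \<and> (\<forall>x. S (T x - cscale 0 x) = x) \<and> (\<forall>x. T (S x) - cscale 0 (S x) = x)"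
    then obtain S where "\<forall>x. T (S x) - cscale 0 (S x) = x" by blast
    then have "T (S y) = y" by simp
    with assms show False by (metis rangeI)
  qed
  then show ?thesis unfolding cspectrum_def by (rule CollectI)
qed

lemma spec_cubic:
  assumes T: "bop T" and rel: "\<And>x. T (T (T x)) = cscale s (T (T x)) - cscale p (T x)"
    and w: "w \<in> cspectrum T"
  shows "w^3 - s * w^2 + p * w = 0"
proof (rule ccontr)
  assume q0: "w^3 - s * w^2 + p * w \<noteq> 0"
  define q where "q = w^3 - s * w^2 + p * w"
  define S where "S = (\<lambda>x. cscale (- 1 / q)
      (T (T x) + cscale (w - s) (T x) + cscale (w^2 - s * w + p) x))"
  have bS: "bop S"
  proof -
    have a: "bop (\<lambda>x. T (T x))" by (rule bop_comp'[OF T T])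
    have b: "bop (\<lambda>x. cscale (w - s) (T x))" by (rule bop_scale[OF T])
    have c: "bop (\<lambda>x. cscale (w^2 - s * w + p) x)" by (rule bop_cscale_op)
    show ?thesis unfolding S_def by (rule bop_scale[OF bop_plus[OF bop_plus[OF a b] c]])
  qed
  have qn: "q \<noteq> 0" using q0 by (simp add: q_def)
  have P1: "T (T (T x - cscale w x)) + cscale (w - s) (T (T x - cscale w x))
      + cscale (w^2 - s * w + p) (T x - cscale w x) = cscale (- q) x" for x
  proof (rule cinner_ext)
    fix z
    show "cinner (T (T (T x - cscale w x)) + cscale (w - s) (T (T x - cscale w x))
      + cscale (w^2 - s * w + p) (T x - cscale w x)) z = cinner (cscale (- q) x) z"
      using T
      apply (simp add: cinner_add_left cinner_diff_left cinner_scale_left bop_diff bop_cscale rel)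
      apply (simp add: q_def algebra_simps power2_eq_square power3_eq_cube)
      done
  qed
  have P2: "T (T (T x) + cscale (w - s) (T x) + cscale (w^2 - s * w + p) x)
      - cscale w (T (T x) + cscale (w - s) (T x) + cscale (w^2 - s * w + p) x) = cscale (- q) x" for x
  proof (rule cinner_ext)
    fix z
    show "cinner (T (T (T x) + cscale (w - s) (T x) + cscale (w^2 - s * w + p) x)
      - cscale w (T (T x) + cscale (w - s) (T x) + cscale (w^2 - s * w + p) x)) z = cinner (cscale (- q) x) z"
      using T
      apply (simp add: cinner_add_left cinner_diff_left cinner_scale_left bop_add bop_cscale rel)
      apply (simp add: q_def algebra_simps power2_eq_square power3_eq_cube)
      done
  qed
  have 1: "S (T x - cscale w x) = x" for x
    using P1[of x] qn by (simp add: S_def cscale_mult)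
  have 2: "T (S x) - cscale w (S x) = x" for x
  proof -
    define V where "V = T (T x) + cscale (w - s) (T x) + cscale (w^2 - s * w + p) x"
    have "T (S x) - cscale w (S x) = cscale (- 1 / q) (T V - cscale w V)"
      using T by (simp add: S_def V_def[symmetric] bop_cscale cscale_diff_right cscale_mult mult.commute)
    also have "\<dots> = x" using P2[of x] qn by (simp add: V_def[symmetric] cscale_mult)
    finally show ?thesis .
  qed
  from bS 1 2 w show False by (auto simp: cspectrum_def)
qed

lemma jacobson:
  assumes X: "bop X" and Y: "bop Y" and w0: "w \<noteq> 0" and w: "w \<in> cspectrum (X \<circ> Y)"
  shows "w \<in> cspectrum (Y \<circ> X)"
proof (rule ccontr)
  assume "w \<notin> cspectrum (Y \<circ> X)"
  then obtain S where S: "bop S" "\<And>x. S (Y (X x) - cscale w x) = x"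
    "\<And>x. Y (X (S x)) - cscale w (S x) = x"
    by (auto simp: cspectrum_def)
  define S' where "S' = (\<lambda>x. cscale (1 / w) (X (S (Y x)) - x))"
  have bS': "bop S'" unfolding S'_def
    by (rule bop_scale[OF bop_minus_op[OF bop_comp'[OF X bop_comp'[OF S(1) Y]] bop_id(2)]])
  have 1: "S' (X (Y x) - cscale w x) = x" for x
  proof -
    have "S (Y (X (Y x)) - cscale w (Y x)) = Y x" by (rule S(2))
    then have "S (Y (X (Y x) - cscale w x)) = Y x" using Y by (simp add: bop_diff bop_cscale)
    then show ?thesis using w0 by (simp add: S'_def cscale_diff_right cscale_mult)
  qed
  have 2: "X (Y (S' x)) - cscale w (S' x) = x" for x
  proof -
    have e: "Y (X (S (Y x))) = Y x + cscale w (S (Y x))" using S(3)[of "Y x"] by (simp add: algebra_simps)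
    have "X (Y (S' x)) = cscale (1/w) (X (Y x) + cscale w (X (S (Y x))) - X (Y x))"
      using X Y by (simp add: S'_def bop_cscale bop_diff e bop_add)
    then show ?thesis using w0 by (simp add: S'_def cscale_diff_right cscale_mult)
  qed
  from bS' 1 2 w show False by (auto simp: cspectrum_def)
qed

lemma periph_eq:
  assumes sub: "cspectrum T \<subseteq> insert 0 Z" and Z: "Z \<subseteq> cspectrum T" "Z \<noteq> {}"
    and rho: "\<And>z. z \<in> Z \<Longrightarrow> cmod z = \<rho>"
  shows "periph_spectrum T = Z"
proof -
  obtain z0 where z0: "z0 \<in> Z" using Z(2) by auto
  have r0: "\<rho> \<ge> 0" using rho[OF z0] by auto
  have "spec_radius T = \<rho>" unfolding spec_radius_def
  proof (rule cSup_eq_maximum)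
    show "\<rho> \<in> cmod ` cspectrum T" using z0 Z(1) rho[OF z0] by force
    show "x \<le> \<rho>" if "x \<in> cmod ` cspectrum T" for x
      using that sub r0 rho by auto
  qed
  then have pe: "periph_spectrum T = {z \<in> cspectrum T. cmod z = \<rho>}"
    by (simp add: periph_spectrum_def)
  show ?thesis
  proof (cases "\<rho> = 0")
    case True
    then have "Z = {0}" using rho Z(2) by auto
    then show ?thesis using pe sub Z(1) True by auto
  next
    case False
    show ?thesis
    proof (rule set_eqI)
      fix z
      show "z \<in> periph_spectrum T \<longleftrightarrow> z \<in> Z"
      proof
        assume "z \<in> periph_spectrum T"
        then have "z \<in> cspectrum T" "cmod z = \<rho>" using pe by auto
        then show "z \<in> Z" using sub False by auto
      next
        assume "z \<in> Z"
        then show "z \<in> periph_spectrum T" using pe Z(1) rho by auto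
      qed
    qed
  qed
qed

lemma rk1_adj:
  assumes adj: "\<And>x y. cinner (A x) y = cinner x (C y)" and A: "bop A" and C: "rk1 C"
  shows "rk1 A"
proof -
  obtain b where b: "\<And>y. \<exists>c. C y = cscale c b" using C by (auto simp: rk1_def)
  then obtain g where g: "\<And>y. C y = cscale (g y) b" by metis
  have key: "A x = 0" if "cinner x b = 0" for x
  proof (rule cinner_ext)
    fix y
    show "cinner (A x) y = cinner 0 y" using that by (simp add: adj g cinner_scale_right)
  qed
  show ?thesis
  proof (cases "b = 0")
    case True
    then have "A x = 0" for x by (intro key) simp
    then show ?thesis by (auto simp: rk1_def)
  next
    case False
    have "A x = cscale (cinner x b / cinner b b) (A b)" for x
    proof -
      define k where "k = cinner x b / cinner b b"
      have "cinner (x - cscale k b) b = 0" using False by (simp add: cinner_diff_left cinner_scale_left k_def)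
      then have "A (x - cscale k b) = 0" by (rule key)
      then show ?thesis using A by (simp add: bop_diff bop_cscale k_def)
    qed
    then show ?thesis unfolding rk1_def by blast
  qed
qed

lemma rk1_adj':
  assumes adj: "\<And>x y. cinner (A x) y = cinner x (C y)" and C: "bop C" and A: "rk1 A"
  shows "rk1 C"
proof (rule rk1_adj[OF _ C A])
  fix x y
  show "cinner (C x) y = cinner x (A y)"
    using adj[of y x] by (metis cinner_commute complex_cnj_cnj)
qed

lemma rk1_periph:
  assumes T: "bop T" and r: "rk1 T" and dim2: "\<forall>x::'a. \<exists>y. \<forall>c. y \<noteq> cscale c x"
  shows "\<exists>z. periph_spectrum (T :: 'a::chilbert \<Rightarrow> 'a) = {z}"
proof -
  obtain b where "\<And>x. \<exists>c. T x = cscale c b" using r by (auto simp: rk1_def)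
  then obtain g where g: "\<And>x. T x = cscale (g x) b" by metis
  obtain \<mu> where mu: "\<And>x. T (T x) = cscale \<mu> (T x)" "\<mu> \<noteq> 0 \<Longrightarrow> b \<noteq> 0 \<and> T b = cscale \<mu> b"
  proof (cases "b = 0")
    case True
    then show ?thesis using that[of 0] g by simp
  next
    case False
    have "T (T x) = cscale (g b) (T x)" for x
      using T by (simp add: g[of x] bop_cscale g[of b] cscale_mult mult.commute)
    then show ?thesis using that[of "g b"] False g[of b] by simp
  qed
  have rel: "T (T (T x)) = cscale \<mu> (T (T x)) - cscale 0 (T x)" for x
    using mu(1)[of "T x"] by simp
  have sub: "cspectrum T \<subseteq> {0, \<mu>}"
  proof
    fix w assume "w \<in> cspectrum T"
    from spec_cubic[OF T rel this] have "w^2 * (w - \<mu>) = 0"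
      by (simp add: algebra_simps power2_eq_square power3_eq_cube)
    then show "w \<in> {0, \<mu>}" by auto
  qed
  show ?thesis
  proof (cases "\<mu> = 0")
    case False
    with mu(2) have "\<mu> \<in> cspectrum T" using spec_eig[OF T] by auto
    then have "periph_spectrum T = {\<mu>}"
      by (intro periph_eq[where \<rho> = "cmod \<mu>"]) (use sub in auto)
    then show ?thesis by blast
  next
    case True
    obtain y where y: "\<forall>c. y \<noteq> cscale c b" using dim2 by blast
    have "y \<notin> range T" using y g by auto
    then have "0 \<in> cspectrum T" by (rule spec_nonsurj)
    then have "periph_spectrum T = {0}"
      by (intro periph_eq[where \<rho> = 0]) (use sub True in auto)
    then show ?thesis by blast
  qed
qed

lemma easy_dir:
  assumes A: "bop A" and r: "rk1 A" and B: "bop B"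
    and dim2: "\<forall>x::'a. \<exists>y. \<forall>c. y \<noteq> cscale c x"
  shows "\<exists>z. periph_spectrum ((B ^^ r) \<circ> cadj A \<circ> (B ^^ s) :: 'a::chilbert \<Rightarrow> 'a) = {z}"
proof -
  have C: "bop (cadj A)" using cadj[OF A] by simp
  have rC: "rk1 (cadj A)" by (rule rk1_adj'[OF cadj(2)[OF A] C r])
  then obtain c where c: "\<And>y. \<exists>k. cadj A y = cscale k c" by (auto simp: rk1_def)
  have Br: "bop (B ^^ r)" "bop (B ^^ s)" using B by (auto intro: bop_funpow)
  have bT: "bop ((B ^^ r) \<circ> cadj A \<circ> (B ^^ s))" using Br C by (intro bop_comp)
  have "\<exists>k. ((B ^^ r) \<circ> cadj A \<circ> (B ^^ s)) x = cscale k ((B ^^ r) c)" for x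
  proof -
    obtain k where "cadj A ((B ^^ s) x) = cscale k c" using c by blast
    then have "((B ^^ r) \<circ> cadj A \<circ> (B ^^ s)) x = cscale k ((B ^^ r) c)"
      using Br by (simp add: bop_cscale)
    then show ?thesis by blast
  qed
  then have "rk1 ((B ^^ r) \<circ> cadj A \<circ> (B ^^ s))" unfolding rk1_def by blast
  from rk1_periph[OF bT this dim2] show ?thesis .
qed

lemma eig2:
  fixes m11 m12 m21 m22 \<mu> :: complex
  assumes ch: "\<mu>^2 - (m11 + m22) * \<mu> + (m11 * m22 - m12 * m21) = 0"
    and ns: "\<not> (m12 = 0 \<and> m21 = 0 \<and> m11 = \<mu> \<and> m22 = \<mu>)"
  shows "\<exists>e1 e2. (e1 \<noteq> 0 \<or> e2 \<noteq> 0) \<and> m11 * e1 + m12 * e2 = \<mu> * e1 \<and> m21 * e1 + m22 * e2 = \<mu> * e2"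
proof (cases "m12 \<noteq> 0 \<or> \<mu> \<noteq> m11")
  case True
  have "m11 * m12 + m12 * (\<mu> - m11) = \<mu> * m12" by (simp add: algebra_simps)
  moreover have "m21 * m12 + m22 * (\<mu> - m11) - \<mu> * (\<mu> - m11)
      = - (\<mu>^2 - (m11 + m22) * \<mu> + (m11 * m22 - m12 * m21))"
    by (simp add: algebra_simps power2_eq_square)
  then have "m21 * m12 + m22 * (\<mu> - m11) = \<mu> * (\<mu> - m11)" using ch by simp
  moreover have "m12 \<noteq> 0 \<or> \<mu> - m11 \<noteq> 0" using True by auto
  ultimately show ?thesis by blast
next
  case False
  then have f: "m12 = 0" "\<mu> = m11" by auto
  have "m11 * (\<mu> - m22) + m12 * m21 - \<mu> * (\<mu> - m22)
      = - (\<mu>^2 - (m11 + m22) * \<mu> + (m11 * m22 - m12 * m21))"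
    by (simp add: algebra_simps power2_eq_square)
  then have "m11 * (\<mu> - m22) + m12 * m21 = \<mu> * (\<mu> - m22)" using ch by simp
  moreover have "m21 * (\<mu> - m22) + m22 * m21 = \<mu> * m21" by (simp add: algebra_simps)
  moreover have "\<mu> - m22 \<noteq> 0 \<or> m21 \<noteq> 0" using ns f by auto
  ultimately show ?thesis by blast
qed

lemma RE_lemma:
  assumes R: "bop R"
    and Ru1: "R u1 = cscale m11 u1 + cscale m21 u2" and Ru2: "R u2 = cscale m12 u1 + cscale m22 u2"
  shows "R (cscale p u1 + cscale q u2) = cscale (m11 * p + m12 * q) u1 + cscale (m21 * p + m22 * q) u2"
proof (rule cinner_ext)
  fix z
  show "cinner (R (cscale p u1 + cscale q u2)) z =
        cinner (cscale (m11 * p + m12 * q) u1 + cscale (m21 * p + m22 * q) u2) z"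
    using R by (simp add: bop_add bop_cscale Ru1 Ru2 cinner_add_left cinner_scale_left algebra_simps)
qed

lemma spec2_eig:
  assumes R: "bop R" and ind: "\<And>p q. cscale p u1 + cscale q u2 = 0 \<Longrightarrow> p = 0 \<and> q = 0"
    and Ru1: "R u1 = cscale m11 u1 + cscale m21 u2" and Ru2: "R u2 = cscale m12 u1 + cscale m22 u2"
    and mu: "\<mu>1 \<noteq> \<mu>2" "\<mu>1 + \<mu>2 = m11 + m22" "\<mu>1 * \<mu>2 = m11 * m22 - m12 * m21"
  shows "\<mu>1 \<in> cspectrum R"
proof -
  have ch: "\<mu>1^2 - (m11 + m22) * \<mu>1 + (m11 * m22 - m12 * m21) = 0"
    unfolding mu(2)[symmetric] mu(3)[symmetric] by (simp add: power2_eq_square algebra_simps)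
  have ns: "\<not> (m12 = 0 \<and> m21 = 0 \<and> m11 = \<mu>1 \<and> m22 = \<mu>1)"
    using mu(1,2) by auto
  obtain e1 e2 where e: "e1 \<noteq> 0 \<or> e2 \<noteq> 0" "m11 * e1 + m12 * e2 = \<mu>1 * e1" "m21 * e1 + m22 * e2 = \<mu>1 * e2"
    using eig2[OF ch ns] by blast
  define v where "v = cscale e1 u1 + cscale e2 u2"
  have v0: "v \<noteq> 0" using ind e(1) by (auto simp: v_def)
  have "R v = cscale \<mu>1 v"
    unfolding v_def RE_lemma[OF R Ru1 Ru2] e(2) e(3)
    by (simp add: cscale_add_right cscale_mult)
  then show ?thesis using spec_eig[OF R v0] by simp
qed

lemma spec2:
  assumes R: "bop R" and ind: "\<And>p q. cscale p u1 + cscale q u2 = 0 \<Longrightarrow> p = 0 \<and> q = 0"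
    and rng: "\<And>x. \<exists>p q. R x = cscale p u1 + cscale q u2"
    and Ru1: "R u1 = cscale m11 u1 + cscale m21 u2" and Ru2: "R u2 = cscale m12 u1 + cscale m22 u2"
    and mu: "\<mu>1 \<noteq> \<mu>2" "\<mu>1 + \<mu>2 = m11 + m22" "\<mu>1 * \<mu>2 = m11 * m22 - m12 * m21"
  shows "cspectrum R \<subseteq> {0, \<mu>1, \<mu>2}" "\<mu>1 \<in> cspectrum R" "\<mu>2 \<in> cspectrum R"
proof -
  show "\<mu>1 \<in> cspectrum R" by (rule spec2_eig[OF R ind Ru1 Ru2 mu])
  show "\<mu>2 \<in> cspectrum R"
    by (rule spec2_eig[OF R ind Ru1 Ru2]) (use mu in \<open>auto simp: algebra_simps\<close>)
  have rel: "R (R (R x)) = cscale (m11 + m22) (R (R x)) - cscale (m11 * m22 - m12 * m21) (R x)" for x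
  proof -
    obtain p q where pq: "R x = cscale p u1 + cscale q u2" using rng by blast
    show ?thesis
    proof (rule cinner_ext)
      fix z
      show "cinner (R (R (R x))) z = cinner (cscale (m11 + m22) (R (R x)) - cscale (m11 * m22 - m12 * m21) (R x)) z"
        unfolding pq RE_lemma[OF R Ru1 Ru2]
        by (simp add: cinner_add_left cinner_diff_left cinner_scale_left algebra_simps)
    qed
  qed
  show "cspectrum R \<subseteq> {0, \<mu>1, \<mu>2}"
  proof
    fix w assume "w \<in> cspectrum R"
    from spec_cubic[OF R rel this]
    have "w^3 - (m11 + m22) * w^2 + (m11 * m22 - m12 * m21) * w = 0" .
    then have "w * ((w - \<mu>1) * (w - \<mu>2)) = 0"
      unfolding mu(2)[symmetric] mu(3)[symmetric]
      by (simp add: algebra_simps power2_eq_square power3_eq_cube)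
    then show "w \<in> {0, \<mu>1, \<mu>2}" by auto
  qed
qed

definition indep :: "'a::chilbert \<Rightarrow> 'a \<Rightarrow> bool" where
  "indep u v \<longleftrightarrow> (\<forall>p q. cscale p u + cscale q v = 0 \<longrightarrow> p = 0 \<and> q = 0)"

lemma cnj_cinner_self[simp]: "cnj (cinner v v) = cinner v v"
  by (simp add: cinner_self)

lemma gram:
  assumes ind: "indep v1 v2"
  shows "cinner v1 v1 * cinner v2 v2 - cinner v2 v1 * cinner v1 v2 \<noteq> 0"
proof
  assume det0: "cinner v1 v1 * cinner v2 v2 - cinner v2 v1 * cinner v1 v2 = 0"
  define a where "a = cinner v1 v1"
  define b where "b = cinner v2 v1"
  have c12: "cinner v1 v2 = cnj b" unfolding b_def by (rule cinner_commute)
  have ca: "cnj a = a" by (simp add: a_def)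
  define w where "w = cscale a v2 - cscale b v1"
  have "cinner w w = a * (cinner v1 v1 * cinner v2 v2 - cinner v2 v1 * cinner v1 v2)"
    unfolding w_def
    by (simp add: cinner_diff_left cinner_diff_right cinner_scale_left cinner_scale_right c12
        a_def[symmetric] b_def[symmetric] ca algebra_simps)
  then have "w = 0" using det0 by simp
  then have "cscale (- b) v1 + cscale a v2 = 0" by (simp add: w_def cscale_minus_left)
  then have "a = 0" using ind by (auto simp: indep_def)
  then have "v1 = 0" by (simp add: a_def)
  then have "cscale 1 v1 + cscale 0 v2 = 0" by simp
  then show False using ind unfolding indep_def by (metis one_neq_zero)
qed

lemma lin_mult: "[:a, b:] * [:c, d:] = [:a * c, a * d + b * c, b * d::'a::comm_ring_1:]"
  by (simp add: algebra_simps)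

lemma exists_sigma:
  fixes h11 h12 h21 h22 k11 k12 k21 k22 l11 l12 l21 l22 m11 m12 m21 m22 :: complex
  assumes "h11 * h22 - h12 * h21 \<noteq> 0" "m11 * m22 - m12 * m21 \<noteq> 0"
  shows "\<exists>\<sigma>. (h11 + \<sigma> * k11) * (h22 + \<sigma> * k22) - (h12 + \<sigma> * k12) * (h21 + \<sigma> * k21) \<noteq> 0
           \<and> (l11 + \<sigma> * m11) * (l22 + \<sigma> * m22) - (l12 + \<sigma> * m12) * (l21 + \<sigma> * m21) \<noteq> 0"
proof -
  define pH where "pH = [:h11, k11:] * [:h22, k22:] - [:h12, k12:] * [:h21, k21:]"
  define pL where "pL = [:l11, m11:] * [:l22, m22:] - [:l12, m12:] * [:l21, m21:]"
  have eH: "poly pH \<sigma> = (h11 + \<sigma> * k11) * (h22 + \<sigma> * k22) - (h12 + \<sigma> * k12) * (h21 + \<sigma> * k21)" for \<sigma>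
    by (simp add: pH_def algebra_simps)
  have eL: "poly pL \<sigma> = (l11 + \<sigma> * m11) * (l22 + \<sigma> * m22) - (l12 + \<sigma> * m12) * (l21 + \<sigma> * m21)" for \<sigma>
    by (simp add: pL_def algebra_simps)
  have "pH \<noteq> 0" using eH[of 0] assms(1) by auto
  moreover have "pL \<noteq> 0"
  proof
    assume "pL = 0"
    then have "coeff pL 2 = 0" by simp
    then show False using assms(2) by (simp add: pL_def lin_mult numeral_2_eq_2 mult.commute)
  qed
  ultimately have "pH * pL \<noteq> 0" by simp
  then have "finite {x. poly (pH * pL) x = 0}" by (rule poly_roots_finite)
  then obtain \<sigma> where "\<sigma> \<notin> {x. poly (pH * pL) x = 0}"
    using ex_new_if_finite[OF infinite_UNIV_char_0[where 'a=complex]] by blast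
  then have "poly (pH * pL) \<sigma> \<noteq> 0" by simp
  then show ?thesis using eH[of \<sigma>] eL[of \<sigma>] by auto
qed

lemma good_data:
  assumes C: "bop C" and ind: "indep (C x1) (C x2)"
  shows "\<exists>u1 u2 g1 g2. cinner u1 g1 = 1 \<and> cinner u2 g1 = 0 \<and> cinner u1 g2 = 0 \<and> cinner u2 g2 = 1
     \<and> cinner (C u1) g1 * cinner (C u2) g2 - cinner (C u2) g1 * cinner (C u1) g2 \<noteq> 0"
proof -
  define y1 where "y1 = C x1"
  define y2 where "y2 = C x2"
  have indx: "indep x1 x2" unfolding indep_def
  proof (intro allI impI)
    fix p q assume "cscale p x1 + cscale q x2 = 0"
    then have "C (cscale p x1 + cscale q x2) = 0" using C by (simp add: bop_zero)
    then have "cscale p (C x1) + cscale q (C x2) = 0" using C by (simp add: bop_add bop_cscale)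
    then show "p = 0 \<and> q = 0" using ind by (auto simp: indep_def)
  qed
  obtain \<sigma> where sig:
    "(cinner x1 x1 + \<sigma> * cinner x1 y1) * (cinner x2 x2 + \<sigma> * cinner x2 y2)
       - (cinner x2 x1 + \<sigma> * cinner x2 y1) * (cinner x1 x2 + \<sigma> * cinner x1 y2) \<noteq> 0"
    "(cinner y1 x1 + \<sigma> * cinner y1 y1) * (cinner y2 x2 + \<sigma> * cinner y2 y2)
       - (cinner y2 x1 + \<sigma> * cinner y2 y1) * (cinner y1 x2 + \<sigma> * cinner y1 y2) \<noteq> 0"
    using exists_sigma[OF gram[OF indx] gram[OF ind[folded y1_def y2_def]]] by blast
  define g1 where "g1 = x1 + cscale (cnj \<sigma>) y1"
  define g2 where "g2 = x2 + cscale (cnj \<sigma>) y2"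
  define H11 where "H11 = cinner x1 g1"
  define H12 where "H12 = cinner x2 g1"
  define H21 where "H21 = cinner x1 g2"
  define H22 where "H22 = cinner x2 g2"
  define L11 where "L11 = cinner y1 g1"
  define L12 where "L12 = cinner y2 g1"
  define L21 where "L21 = cinner y1 g2"
  define L22 where "L22 = cinner y2 g2"
  define dH where "dH = H11 * H22 - H12 * H21"
  define dL where "dL = L11 * L22 - L12 * L21"
  have dH: "dH \<noteq> 0" using sig(1)
    by (simp add: dH_def H11_def H12_def H21_def H22_def g1_def g2_def cinner_add_right cinner_scale_right)
  have dL: "dL \<noteq> 0" using sig(2)
    by (simp add: dL_def L11_def L12_def L21_def L22_def g1_def g2_def cinner_add_right cinner_scale_right)
  define u1 where "u1 = cscale (H22 / dH) x1 + cscale (- H21 / dH) x2"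
  define u2 where "u2 = cscale (- H12 / dH) x1 + cscale (H11 / dH) x2"
  have Cu1: "C u1 = cscale (H22 / dH) y1 + cscale (- H21 / dH) y2"
    using C by (simp add: u1_def bop_add bop_cscale y1_def y2_def)
  have Cu2: "C u2 = cscale (- H12 / dH) y1 + cscale (H11 / dH) y2"
    using C by (simp add: u2_def bop_add bop_cscale y1_def y2_def)
  have 1: "cinner u1 g1 = 1"
  proof -
    have "cinner u1 g1 = (H22 * H11 - H21 * H12) / dH"
      by (simp add: u1_def cinner_add_left cinner_scale_left H11_def[symmetric] H12_def[symmetric]
          diff_divide_distrib)
    then show ?thesis using dH by (simp add: dH_def mult.commute)
  qed
  have 2: "cinner u2 g1 = 0"
  proof -
    have "cinner u2 g1 = (H11 * H12 - H12 * H11) / dH"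
      by (simp add: u2_def cinner_add_left cinner_scale_left H11_def[symmetric] H12_def[symmetric]
          diff_divide_distrib)
    then show ?thesis by simp
  qed
  have 3: "cinner u1 g2 = 0"
  proof -
    have "cinner u1 g2 = (H22 * H21 - H21 * H22) / dH"
      by (simp add: u1_def cinner_add_left cinner_scale_left H21_def[symmetric] H22_def[symmetric]
          diff_divide_distrib)
    then show ?thesis by simp
  qed
  have 4: "cinner u2 g2 = 1"
  proof -
    have "cinner u2 g2 = (H11 * H22 - H12 * H21) / dH"
      by (simp add: u2_def cinner_add_left cinner_scale_left H21_def[symmetric] H22_def[symmetric]
          diff_divide_distrib)
    then show ?thesis using dH by (simp add: dH_def)
  qed
  have "cinner (C u1) g1 * cinner (C u2) g2 - cinner (C u2) g1 * cinner (C u1) g2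
     = ((H22 * L11 - H21 * L12) * (H11 * L22 - H12 * L21) - (H11 * L12 - H12 * L11) * (H22 * L21 - H21 * L22)) / (dH * dH)"
    by (simp add: Cu1 Cu2 cinner_add_left cinner_scale_left L11_def[symmetric] L12_def[symmetric]
        L21_def[symmetric] L22_def[symmetric] diff_divide_distrib add_divide_distrib algebra_simps)
  also have "\<dots> = dL * dH / (dH * dH)"
    by (simp add: dL_def dH_def algebra_simps)
  also have "\<dots> = dL / dH" using dH by simp
  finally have e5: "cinner (C u1) g1 * cinner (C u2) g2 - cinner (C u2) g1 * cinner (C u1) g2 = dL / dH" .
  then have 5: "cinner (C u1) g1 * cinner (C u2) g2 - cinner (C u2) g1 * cinner (C u1) g2 \<noteq> 0"
    using dH dL by simp
  show ?thesis using 1 2 3 4 5 by blast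
qed

lemma choose_coeffs:
  fixes G11 G12 G21 G22 :: complex
  assumes d: "G11 * G22 - G12 * G21 \<noteq> 0"
  shows "\<exists>a b \<mu>1 \<mu>2. a \<noteq> 0 \<and> b \<noteq> 0 \<and> \<mu>1 \<noteq> \<mu>2 \<and> cmod \<mu>1 = cmod \<mu>2 \<and> \<mu>1 \<noteq> 0 \<and>
     \<mu>1 + \<mu>2 = a * G11 + b * G22 \<and> \<mu>1 * \<mu>2 = (a * G11) * (b * G22) - (a * G12) * (b * G21)"
proof -
  have tz: "\<exists>a b \<mu>1 \<mu>2. a \<noteq> 0 \<and> b \<noteq> 0 \<and> \<mu>1 \<noteq> \<mu>2 \<and> cmod \<mu>1 = cmod \<mu>2 \<and> \<mu>1 \<noteq> 0 \<and>
     \<mu>1 + \<mu>2 = a * G11 + b * G22 \<and> \<mu>1 * \<mu>2 = (a * G11) * (b * G22) - (a * G12) * (b * G21)"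
    if ab: "a \<noteq> 0" "b \<noteq> 0" "a * G11 + b * G22 = 0" for a b
  proof -
    define D where "D = (a * G11) * (b * G22) - (a * G12) * (b * G21)"
    have "D = a * b * (G11 * G22 - G12 * G21)" by (simp add: D_def algebra_simps)
    then have D0: "D \<noteq> 0" using ab d by simp
    define \<mu> where "\<mu> = csqrt (- D)"
    have m0: "\<mu> \<noteq> 0" using D0 by (simp add: \<mu>_def)
    have "\<mu> * (- \<mu>) = D" using power2_csqrt[of "- D"] by (simp add: \<mu>_def power2_eq_square)
    moreover have "\<mu> \<noteq> - \<mu>" using m0 by simp
    ultimately show ?thesis using ab m0 by (intro exI[of _ a] exI[of _ b] exI[of _ \<mu>] exI[of _ "- \<mu>"])
        (simp add: D_def)
  qed
  consider "G11 = 0 \<and> G22 = 0" | "G11 \<noteq> 0 \<and> G22 \<noteq> 0" | "G11 \<noteq> 0 \<and> G22 = 0" | "G11 = 0 \<and> G22 \<noteq> 0"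
    by blast
  then show ?thesis
  proof cases
    case 1 then show ?thesis using tz[of 1 1] by simp
  next
    case 2 then show ?thesis using tz[of G22 "- G11"] by (simp add: algebra_simps)
  next
    case 3
    then have dd: "G12 * G21 \<noteq> 0" "G11 * G22 - G12 * G21 = - (G12 * G21)" using d by auto
    define a where "a = 2 / G11"
    define b where "b = G11 / (G11 * G22 - G12 * G21)"
    have "a \<noteq> 0" "b \<noteq> 0" using 3 d by (auto simp: a_def b_def)
    moreover have "(1 + \<i>) + (1 - \<i>) = a * G11 + b * G22" using 3 by (simp add: a_def)
    moreover have "(1 + \<i>) * (1 - \<i>) = (a * G11) * (b * G22) - (a * G12) * (b * G21)"
      using 3 dd by (simp add: a_def b_def field_simps)
    moreover have "(1 + \<i>) \<noteq> (1 - \<i>)" by (simp add: complex_eq_iff)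
    moreover have "cmod (1 + \<i>) = cmod (1 - \<i>)" by (simp add: cmod_def)
    moreover have "(1 + \<i>) \<noteq> 0" by (simp add: complex_eq_iff)
    ultimately show ?thesis by blast
  next
    case 4
    then have dd: "G12 * G21 \<noteq> 0" "G11 * G22 - G12 * G21 = - (G12 * G21)" using d by auto
    define b where "b = 2 / G22"
    define a where "a = G22 / (G11 * G22 - G12 * G21)"
    have "a \<noteq> 0" "b \<noteq> 0" using 4 d by (auto simp: a_def b_def)
    moreover have "(1 + \<i>) + (1 - \<i>) = a * G11 + b * G22" using 4 by (simp add: b_def)
    moreover have "(1 + \<i>) * (1 - \<i>) = (a * G11) * (b * G22) - (a * G12) * (b * G21)"
      using 4 dd by (simp add: a_def b_def field_simps)
    moreover have "(1 + \<i>) \<noteq> (1 - \<i>)" by (simp add: complex_eq_iff)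
    moreover have "cmod (1 + \<i>) = cmod (1 - \<i>)" by (simp add: cmod_def)
    moreover have "(1 + \<i>) \<noteq> 0" by (simp add: complex_eq_iff)
    ultimately show ?thesis by blast
  qed
qed

lemma not_rk1_indep:
  assumes C: "bop C" and nr: "\<not> rk1 C"
  shows "\<exists>x1 x2. indep (C x1) (C x2)"
proof -
  from nr have nr': "\<forall>b. \<exists>x. \<forall>c. C x \<noteq> cscale c b" by (auto simp: rk1_def)
  then obtain x1 where x1: "\<forall>c. C x1 \<noteq> cscale c 0" by blast
  then have y1: "C x1 \<noteq> 0" by simp
  obtain x2 where x2: "\<forall>c. C x2 \<noteq> cscale c (C x1)" using nr' by blast
  have "indep (C x1) (C x2)" unfolding indep_def
  proof (intro allI impI)
    fix p q assume h: "cscale p (C x1) + cscale q (C x2) = 0"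
    have q0: "q = 0"
    proof (rule ccontr)
      assume "q \<noteq> 0"
      have "cscale q (C x2) = - cscale p (C x1)" using h by (simp add: eq_neg_iff_add_eq_0 add.commute)
      then have "cscale (inverse q) (cscale q (C x2)) = cscale (inverse q) (- cscale p (C x1))" by simp
      then have "C x2 = cscale (- (inverse q * p)) (C x1)"
        using \<open>q \<noteq> 0\<close> by (simp add: cscale_mult cscale_minus_right cscale_minus_left)
      with x2 show False by blast
    qed
    with h have "cscale p (C x1) = 0" by simp
    with y1 have "p = 0" by simp
    with q0 show "p = 0 \<and> q = 0" by simp
  qed
  then show ?thesis by blast
qed

lemma hard:
  fixes C :: "'a::chilbert \<Rightarrow> 'a"
  assumes C: "bop C" and nr: "\<not> rk1 C" and std: "standard_op_alg \<A>" and rs: "r + s \<ge> 1"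
  shows "\<exists>B\<in>\<A>. crank B \<le> 2 \<and> \<not> (\<exists>z. periph_spectrum ((B ^^ r) \<circ> C \<circ> (B ^^ s)) = {z})"
proof -
  obtain x1 x2 where ind: "indep (C x1) (C x2)" using not_rk1_indep[OF C nr] by blast
  obtain u1 u2 g1 g2 where bi: "cinner u1 g1 = 1" "cinner u2 g1 = 0" "cinner u1 g2 = 0" "cinner u2 g2 = 1"
    and dG: "cinner (C u1) g1 * cinner (C u2) g2 - cinner (C u2) g1 * cinner (C u1) g2 \<noteq> 0"
    using good_data[OF C ind] by blast
  define G11 where "G11 = cinner (C u1) g1"
  define G12 where "G12 = cinner (C u2) g1"
  define G21 where "G21 = cinner (C u1) g2"
  define G22 where "G22 = cinner (C u2) g2"
  obtain a b \<mu>1 \<mu>2 where ab: "a \<noteq> 0" "b \<noteq> 0" and mu: "\<mu>1 \<noteq> \<mu>2" "cmod \<mu>1 = cmod \<mu>2" "\<mu>1 \<noteq> 0"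
    "\<mu>1 + \<mu>2 = a * G11 + b * G22" "\<mu>1 * \<mu>2 = (a * G11) * (b * G22) - (a * G12) * (b * G21)"
    using choose_coeffs[of G11 G22 G12 G21] dG
    unfolding G11_def[symmetric] G12_def[symmetric] G21_def[symmetric] G22_def[symmetric] by blast
  have mu2: "\<mu>2 \<noteq> 0" using mu(2,3) by auto
  define n where "n = r + s"
  have n0: "n \<noteq> 0" using rs by (simp add: n_def) linarith
  obtain \<alpha> where \<alpha>: "a = \<alpha> ^ n" using exists_complex_root[OF n0] by blast
  obtain \<beta> where \<beta>: "b = \<beta> ^ n" using exists_complex_root[OF n0] by blast
  define B where "B = (\<lambda>x. cscale (\<alpha> * cinner x g1) u1 + cscale (\<beta> * cinner x g2) u2)"
  have bB: "bop B"
  proof -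
    have "bop (\<lambda>x. cscale \<alpha> (cscale (cinner x g1) u1) + cscale \<beta> (cscale (cinner x g2) u2))"
      by (intro bop_plus bop_scale bop_rank1)
    then show ?thesis by (simp add: B_def cscale_mult)
  qed
  have Bk: "(B ^^ k) x = cscale (\<alpha> ^ k * cinner x g1) u1 + cscale (\<beta> ^ k * cinner x g2) u2"
    if "k \<ge> 1" for k x
    using that
  proof (induction k rule: dec_induct)
    case base
    then show ?case by (simp add: B_def)
  next
    case (step k)
    have "(B ^^ Suc k) x = B ((B ^^ k) x)" by simp
    also have "\<dots> = cscale (\<alpha> ^ Suc k * cinner x g1) u1 + cscale (\<beta> ^ Suc k * cinner x g2) u2"
      unfolding step.IH
      by (simp add: B_def cinner_add_left cinner_scale_left bi mult.assoc)
    finally show ?case .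
  qed
  have B2: "crank B \<le> 2" by (rule crank_le2[of B u1 u2]) (auto simp: B_def)
  have Bfin: "crank B < \<infinity>" by (rule crank_le2_fin[of B u1 u2]) (auto simp: B_def)
  have BA: "B \<in> \<A>" using std bB Bfin by (simp add: standard_op_alg_def)
  have indu: "p = 0 \<and> q = 0" if "cscale p u1 + cscale q u2 = 0" for p q
  proof -
    have "cinner (cscale p u1 + cscale q u2) g1 = 0" "cinner (cscale p u1 + cscale q u2) g2 = 0"
      using that by simp_all
    then show ?thesis by (simp add: cinner_add_left cinner_scale_left bi)
  qed
  define K where "K = B ^^ n"
  have Kx: "K x = cscale (a * cinner x g1) u1 + cscale (b * cinner x g2) u2" for x
    using Bk[of n x] n0 by (simp add: K_def \<alpha> \<beta>)
  have bK: "bop K" unfolding K_def by (rule bop_funpow[OF bB])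
  define R where "R = K \<circ> C"
  have bR: "bop R" unfolding R_def by (rule bop_comp[OF bK C])
  have Rx: "R x = cscale (a * cinner (C x) g1) u1 + cscale (b * cinner (C x) g2) u2" for x
    by (simp add: R_def Kx)
  have Ru1: "R u1 = cscale (a * G11) u1 + cscale (b * G21) u2" by (simp add: Rx G11_def G21_def)
  have Ru2: "R u2 = cscale (a * G12) u1 + cscale (b * G22) u2" by (simp add: Rx G12_def G22_def)
  have rng: "\<exists>p q. R x = cscale p u1 + cscale q u2" for x using Rx by blast
  have sR: "cspectrum R \<subseteq> {0, \<mu>1, \<mu>2}" "\<mu>1 \<in> cspectrum R" "\<mu>2 \<in> cspectrum R"
    using spec2[OF bR indu rng Ru1 Ru2 mu(1) mu(4) mu(5)] by auto
  define T where "T = (B ^^ r) \<circ> C \<circ> (B ^^ s)"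
  have bBr: "bop (B ^^ r)" "bop (B ^^ s)" using bB by (auto intro: bop_funpow)
  have bCs: "bop (C \<circ> B ^^ s)" by (rule bop_comp[OF C bBr(2)])
  have e1: "(C \<circ> B ^^ s) \<circ> B ^^ r = C \<circ> K"
  proof -
    have "K = B ^^ (s + r)" by (simp add: K_def n_def add.commute)
    also have "\<dots> = B ^^ s \<circ> B ^^ r" by (rule funpow_add)
    finally show ?thesis by (simp add: o_assoc)
  qed
  have T_eq: "T = B ^^ r \<circ> (C \<circ> B ^^ s)" by (simp add: T_def o_assoc)
  have TR: "w \<in> cspectrum T \<longleftrightarrow> w \<in> cspectrum R" if "w \<noteq> 0" for w
  proof
    assume "w \<in> cspectrum T"
    then have "w \<in> cspectrum ((C \<circ> B ^^ s) \<circ> B ^^ r)"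
      unfolding T_eq by (rule jacobson[OF bBr(1) bCs that])
    then have "w \<in> cspectrum (C \<circ> K)" by (simp add: e1)
    then show "w \<in> cspectrum R" unfolding R_def by (rule jacobson[OF C bK that])
  next
    assume "w \<in> cspectrum R"
    then have "w \<in> cspectrum (C \<circ> K)" unfolding R_def by (rule jacobson[OF bK C that])
    then have "w \<in> cspectrum ((C \<circ> B ^^ s) \<circ> B ^^ r)" by (simp add: e1)
    then show "w \<in> cspectrum T" unfolding T_eq by (rule jacobson[OF bCs bBr(1) that])
  qed
  have subT: "cspectrum T \<subseteq> insert 0 {\<mu>1, \<mu>2}"
  proof
    fix w assume w: "w \<in> cspectrum T"
    show "w \<in> insert 0 {\<mu>1, \<mu>2}"
    proof (cases "w = 0")
      case False
      then have "w \<in> cspectrum R" using TR w by blast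
      then show ?thesis using sR(1) by auto
    qed simp
  qed
  have inT: "{\<mu>1, \<mu>2} \<subseteq> cspectrum T" using TR[OF mu(3)] TR[OF mu2] sR(2,3) by auto
  have "periph_spectrum T = {\<mu>1, \<mu>2}"
    by (rule periph_eq[OF subT inT, where \<rho> = "cmod \<mu>1"]) (use mu(2) in auto)
  then have "\<not> (\<exists>z. periph_spectrum T = {z})" using mu(1) by (auto simp: doubleton_eq_iff)
  then show ?thesis using BA B2 unfolding T_def by blast
qed

theorem lemma3p3:
  fixes \<A> :: "('a::chilbert \<Rightarrow> 'a) set" and r s :: nat and A :: "'a \<Rightarrow> 'a"
  assumes dim2: "\<forall>x::'a. \<exists>y. \<forall>c. y \<noteq> cscale c x"
    and std: "standard_op_alg \<A>"
    and rs: "r + s \<ge> 1"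
    and A: "A \<in> \<A>" "A \<noteq> (\<lambda>_. 0)"
  shows "(crank A = 1 \<longleftrightarrow>
            (\<forall>B\<in>\<A>. \<exists>z. periph_spectrum ((B ^^ r) \<circ> cadj A \<circ> (B ^^ s)) = {z}))
       \<and> ((\<forall>B\<in>\<A>. \<exists>z. periph_spectrum ((B ^^ r) \<circ> cadj A \<circ> (B ^^ s)) = {z}) \<longleftrightarrow>
            (\<forall>B\<in>\<A>. crank B \<le> 2 \<longrightarrow>
               (\<exists>z. periph_spectrum ((B ^^ r) \<circ> cadj A \<circ> (B ^^ s)) = {z})))"
proof -
  have bA: "bop A" using std A(1) by (simp add: standard_op_alg_def)
  have bopB: "bop B" if "B \<in> \<A>" for B using std that by (simp add: standard_op_alg_def)
  have P1: "crank A = 1 \<longleftrightarrow> rk1 A" by (rule crank_one_iff[OF A(2)])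
  have 12: "\<forall>B\<in>\<A>. \<exists>z. periph_spectrum ((B ^^ r) \<circ> cadj A \<circ> (B ^^ s)) = {z}" if "rk1 A"
    using easy_dir[OF bA that bopB dim2] by blast
  have 31: "rk1 A" if h3: "\<forall>B\<in>\<A>. crank B \<le> 2 \<longrightarrow>
               (\<exists>z. periph_spectrum ((B ^^ r) \<circ> cadj A \<circ> (B ^^ s)) = {z})"
  proof (rule ccontr)
    assume nA: "\<not> rk1 A"
    have nC: "\<not> rk1 (cadj A)"
    proof
      assume "rk1 (cadj A)"
      then have "rk1 A" by (rule rk1_adj[OF cadj(2)[OF bA] bA])
      with nA show False by simp
    qed
    obtain B where "B \<in> \<A>" "crank B \<le> 2"
      "\<not> (\<exists>z. periph_spectrum ((B ^^ r) \<circ> cadj A \<circ> (B ^^ s)) = {z})"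
      using hard[OF cadj(1)[OF bA] nC std rs] by blast
    with h3 show False by blast
  qed
  show ?thesis using P1 12 31 by blast
qed

end
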